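(* For every $\alpha>\frac13$ and every $C>0$ there exists a Borel probability measure $\mu$ on $\mathbb{R}$ with $m_1(\mu)=0$, $m_2(\mu)=1$, $m_4(\mu)<\infty$ such that $$L(\mu,\mathbf{b})>C\,(m_4(\mu)-1)^{\alpha}.$$
   Context: $m_k(\mu)=\int x^k\,d\mu(x)$ (note $m_4(\mu)-1$ equals the fourth Boolean cumulant $r_4(\mu)$ for such $\mu$). $\mathbf{b}=\frac12\delta_{-1}+\frac12\delta_1$. The Lévy distance between probability measures with distribution functions $F,G$ is $L=\inf\{\epsilon>0: F(x-\epsilon)-\epsilon\le G(x)\le F(x+\epsilon)+\epsilon\ \forall x\in\mathbb{R}\}$. *)

theory Defs
  imports "HOL-Probability.Probability"
begin

definition bern_sym :: "real measure" where
  "bern_sym = measure_pmf (pmf_of_set {-1, 1})"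

definition levy_dist :: "(real \<Rightarrow> real) \<Rightarrow> (real \<Rightarrow> real) \<Rightarrow> real" where
  "levy_dist F G = Inf {e. e > 0 \<and> (\<forall>x. F (x - e) - e \<le> G x \<and> G x \<le> F (x + e) + e)}"

definition moment :: "real measure \<Rightarrow> nat \<Rightarrow> real" where
  "moment M k = (\<integral>x. x ^ k \<partial>M)"

end

theory Submission
  imports Defs
begin

definition pp :: "real \<Rightarrow> (bool \<times> real) pmf" where
  "pp d = pair_pmf (bernoulli_pmf d) (pmf_of_set {-1,1})"
definition ff :: "real \<Rightarrow> real \<Rightarrow> bool \<times> real \<Rightarrow> real" where
  "ff a b z = snd z * (if fst z then a else b)"
definition MM :: "real \<Rightarrow> real \<Rightarrow> real \<Rightarrow> real measure" where
  "MM d a b = distr (measure_pmf (pp d)) borel (ff a b)"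

lemma ff_meas[measurable]: "ff a b \<in> measurable (measure_pmf p) borel"
  by simp

lemma pp_set: "0 < d \<Longrightarrow> d < 1 \<Longrightarrow> set_pmf (pp d) = UNIV \<times> {-1,1}"
  by (simp add: pp_def)

lemma pp_pmf: "0 < d \<Longrightarrow> d < 1 \<Longrightarrow> s \<in> {-1,1} \<Longrightarrow> pmf (pp d) (c, s) = (if c then d else 1 - d) / 2"
  by (auto simp: pp_def pmf_pair)

lemma MM_int:
  assumes "0 < d" "d < 1" and [measurable]: "g \<in> borel_measurable borel"
  shows "integrable (MM d a b) g \<and> (\<integral>x. g x \<partial>MM d a b) = d/2 * (g a + g (-a)) + (1-d)/2 * (g b + g (-b))"
proof -
  have fin: "finite (set_pmf (pp d))" using assms by (simp add: pp_set)
  have "integrable (MM d a b) g"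
    unfolding MM_def using fin
    by (subst integrable_distr_eq) (auto intro!: integrable_measure_pmf_finite)
  moreover have "(\<integral>x. g x \<partial>MM d a b) = (\<integral>z. g (ff a b z) \<partial>measure_pmf (pp d))"
    unfolding MM_def by (rule integral_distr) auto
  moreover have "\<dots> = (\<Sum>z\<in>UNIV \<times> {-1,1}. g (ff a b z) * pmf (pp d) z)"
    by (rule integral_measure_pmf_real) (use assms in \<open>auto simp: pp_set\<close>)
  moreover have "\<dots> = d/2 * (g a + g (-a)) + (1-d)/2 * (g b + g (-b))"
    using assms by (simp add: UNIV_bool pp_pmf ff_def algebra_simps) (simp add: field_simps)
  ultimately show ?thesis by simp
qed

lemma MM_prob: "prob_space (MM d a b)"
  unfolding MM_def by (rule prob_space.prob_space_distr) (auto simp: prob_space_measure_pmf)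

lemma MM_cdf:
  assumes "0 < d" "d < 1" "0 \<le> a" "0 \<le> b"
  shows "cdf (MM d a b) a \<ge> 1/2 + d/2"
proof -
  have "cdf (MM d a b) a = measure (measure_pmf (pp d)) (ff a b -` {..a})"
    unfolding cdf_def MM_def by (subst measure_distr) auto
  also have "\<dots> \<ge> measure (measure_pmf (pp d)) {(True,1),(True,-1),(False,-1)}"
    by (rule measure_pmf.finite_measure_mono) (use assms in \<open>auto simp: ff_def\<close>)
  moreover have "measure (measure_pmf (pp d)) {(True,1),(True,-1),(False,-1)} = 1/2 + d/2"
    using assms by (subst measure_measure_pmf_finite) (auto simp: pp_pmf field_simps)
  ultimately show ?thesis by simp
qed

lemma bern_cdf: "-1 \<le> x \<Longrightarrow> x < 1 \<Longrightarrow> cdf bern_sym x = 1/2"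
proof -
  assume h: "-1 \<le> x" "x < 1"
  have "{-1,1::real} \<inter> {..x} = {-1}" using h by auto
  then show ?thesis unfolding cdf_def bern_sym_def
    by (subst measure_pmf_of_set) auto
qed

theorem mainTheorem5:
  fixes \<alpha> C :: real
  assumes "\<alpha> > 1/3" and "C > 0"
  shows "\<exists>\<mu> :: real measure. sets \<mu> = sets borel \<and> prob_space \<mu> \<and>
    integrable \<mu> (\<lambda>x. x) \<and> integrable \<mu> (\<lambda>x. x ^ 2) \<and> integrable \<mu> (\<lambda>x. x ^ 4) \<and>
    moment \<mu> 1 = 0 \<and> moment \<mu> 2 = 1 \<and>
    levy_dist (cdf \<mu>) (cdf bern_sym) > C * (moment \<mu> 4 - 1) powr \<alpha>"
proof -
  define K where "K = 1 / (4 * C * 8 powr \<alpha>)"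
  have K: "K > 0" using assms by (simp add: K_def)
  define d where "d = min (1/2) (K powr (1 / (3*\<alpha> - 1)))"
  have d0: "0 < d" and d1: "d \<le> 1/2" using K by (auto simp: d_def)
  have dK: "d powr (3*\<alpha> - 1) \<le> K"
  proof -
    have "d powr (3*\<alpha> - 1) \<le> (K powr (1 / (3*\<alpha> - 1))) powr (3*\<alpha> - 1)"
      using d0 assms(1) by (intro powr_mono2) (auto simp: d_def)
    also have "\<dots> = K" using K assms(1) by (simp add: powr_powr)
    finally show ?thesis .
  qed
  define a where "a = 1 - d"
  define v where "v = (1 - d * a^2) / (1 - d)"
  have a0: "a > 0" "a < 1" using d0 d1 by (auto simp: a_def)
  have v0: "v > 0"
  proof -
    have "d * a^2 < 1" using d0 d1 a0 proof -
      have "a^2 < 1" using a0 by (simp add: power_less_one_iff)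
      then have "d * a^2 \<le> 1 * a^2" using d1 by (intro mult_right_mono) auto
      then show ?thesis using \<open>a^2 < 1\<close> by simp
    qed
    then show ?thesis using d1 by (simp add: v_def)
  qed
  define b where "b = sqrt v"
  have b0: "b \<ge> 0" and b2: "b^2 = v" using v0 by (auto simp: b_def)
  have b4: "b^4 = v^2" using b2 by (metis power_mult numeral_times_numeral semiring_norm(12) mult_2_right numeral_Bit0)
  define \<mu> where "\<mu> = MM d a b"
  have dl: "0 < d" "d < 1" using d0 d1 by auto
  note I = MM_int[OF dl, of _ a b, folded \<mu>_def]
  have m1: "moment \<mu> 1 = 0" unfolding moment_def using I[of "\<lambda>x. x^1"] by simp
  have vv: "(1 - d) * v = 1 - d * a^2" using dl by (simp add: v_def)
  have m2: "moment \<mu> 2 = 1"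
  proof -
    have "moment \<mu> 2 = d * a^2 + (1 - d) * b^2" unfolding moment_def using I[of "\<lambda>x. x^2"]
      by (simp add: field_simps)
    then show ?thesis using b2 vv by simp
  qed
  have m4: "moment \<mu> 4 - 1 = d^3 * (2 - d)^2 / (1 - d)"
  proof -
    have "moment \<mu> 4 = d * a^4 + (1 - d) * v^2" unfolding moment_def using I[of "\<lambda>x. x^4"] b4
      by (simp add: field_simps)
    also have "(1 - d) * v^2 = (1 - d * a^2)^2 / (1 - d)" using dl vv
      by (simp add: v_def power2_eq_square)
    finally show ?thesis using dl unfolding a_def
      by (simp add: field_simps) (simp add: algebra_simps power2_eq_square power3_eq_cube power4_eq_xxxx)
  qed
  have m4b: "moment \<mu> 4 - 1 \<le> 8 * d^3"
  proof -
    have "(2 - d)^2 / (1 - d) \<le> 8" 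
    proof -
      have "(2 - d)^2 \<le> 2^2" using dl by (intro power_mono) auto
      also have "\<dots> \<le> 8 * (1 - d)" using d1 by simp
      finally show ?thesis using dl by (simp add: field_simps)
    qed
    then have "d^3 * ((2 - d)^2 / (1 - d)) \<le> d^3 * 8" using dl by (intro mult_left_mono) auto
    then show ?thesis using m4 by simp
  qed
  have m4p: "moment \<mu> 4 - 1 \<ge> 0" using m4 dl by simp
  define S where "S = {e. e > 0 \<and> (\<forall>x. cdf \<mu> (x - e) - e \<le> cdf bern_sym x \<and> cdf bern_sym x \<le> cdf \<mu> (x + e) + e)}"
  have P1: "prob_space \<mu>" unfolding \<mu>_def by (rule MM_prob)
  have P2: "prob_space bern_sym" unfolding bern_sym_def by (rule prob_space_measure_pmf)
  have cb: "0 \<le> cdf M x \<and> cdf M x \<le> 1" if "prob_space M" for M x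
    using that by (simp add: cdf_def prob_space.prob_le_1)
  have "1 \<in> S" unfolding S_def
  proof (intro CollectI conjI allI)
    fix x
    show "cdf \<mu> (x - 1) - 1 \<le> cdf bern_sym x"
      using cb[OF P1, of "x - 1"] cb[OF P2, of x] by linarith
    show "cdf bern_sym x \<le> cdf \<mu> (x + 1) + 1"
      using cb[OF P1, of "x + 1"] cb[OF P2, of x] by linarith
  qed simp
  moreover have "d/2 \<le> e" if "e \<in> S" for e
  proof (rule ccontr)
    assume "\<not> d/2 \<le> e"
    then have e: "e < d/2" "e > 0" using that by (auto simp: S_def)
    have "cdf \<mu> (a + e - e) - e \<le> cdf bern_sym (a + e)" using that unfolding S_def
      by (metis (no_types, lifting) mem_Collect_eq)
    moreover have "cdf bern_sym (a + e) = 1/2" using e a0 by (intro bern_cdf) (auto simp: a_def)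
    moreover have "cdf \<mu> a \<ge> 1/2 + d/2" unfolding \<mu>_def using dl a0 b0 by (intro MM_cdf) auto
    ultimately show False using e by simp
  qed
  ultimately have L: "d/2 \<le> levy_dist (cdf \<mu>) (cdf bern_sym)"
    unfolding levy_dist_def S_def[symmetric] by (intro cInf_greatest) auto
  have "C * (moment \<mu> 4 - 1) powr \<alpha> \<le> C * (8 * d^3) powr \<alpha>"
    using assms m4p m4b by (intro mult_left_mono powr_mono2) auto
  also have "(8 * d^3) powr \<alpha> = 8 powr \<alpha> * d powr (3*\<alpha>)"
  proof -
    have "(8 * d^3) powr \<alpha> = 8 powr \<alpha> * (d^3) powr \<alpha>" by (rule powr_mult)
    moreover have "d^3 = d powr 3" using dl by (simp add: powr_realpow)
    moreover have "(d powr 3) powr \<alpha> = d powr (3*\<alpha>)" by (simp add: powr_powr)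
    ultimately show ?thesis by simp
  qed
  also have "d powr (3*\<alpha>) = d * d powr (3*\<alpha> - 1)"
    using dl by (simp add: powr_diff)
  also have "C * (8 powr \<alpha> * (d * d powr (3*\<alpha> - 1))) \<le> C * 8 powr \<alpha> * d * K"
    using dK assms dl by (simp add: mult.assoc mult_left_mono)
  also have "\<dots> = d / 4" using assms by (simp add: K_def)
  also have "\<dots> < d / 2" using dl by simp
  finally have "C * (moment \<mu> 4 - 1) powr \<alpha> < levy_dist (cdf \<mu>) (cdf bern_sym)" using L by simp
  moreover have "sets \<mu> = sets borel" by (simp add: \<mu>_def MM_def)
  ultimately show ?thesis
  proof (intro exI[of _ \<mu>] conjI)
    show "integrable \<mu> (\<lambda>x. x)" using I[of "\<lambda>x. x"] by simp
    show "integrable \<mu> (\<lambda>x. x^2)" using I[of "\<lambda>x. x^2"] by simp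
    show "integrable \<mu> (\<lambda>x. x^4)" using I[of "\<lambda>x. x^4"] by simp
  qed (use P1 m1 m2 in auto)
qed

end
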